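(* Suppose $(a_1,a_2,a_3)\in\mathbb Z^3$ is one of the twelve triples $$(0,-2,1),\ (1,0,0),\ (-2,0,0),\ (0,1,-2),\ (1,-4,0),\ (0,2,1),\ (-4,1,2),\ (2,0,-4),\ (0,-5,1),\ (1,3,0),\ (-5,0,3),\ (3,1,-5),$$ or belongs to one of the four infinite families $(0,-2m-2,2m+1)$, $(2m+1,0,0)$, $(-2m-2,0,0)$, $(0,2m+1,-2m-2)$ with $m$ a nonnegative integer. Then the indefinite integral $$\int \frac{(1-k^2)^{a_1}(1+k-k^2)^{a_2}(1-4k-k^2)^{a_3}}{k^{a_1+a_2+a_3+1}}\,dk$$ is a rational function of $k$; that is, there is a rational function $g(k)$ whose derivative equals the integrand. *)

theory Defs
  imports Complex_Main "HOL-Computational_Algebra.Polynomial"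
begin

definition integrand :: "int \<Rightarrow> int \<Rightarrow> int \<Rightarrow> real \<Rightarrow> real" where
  "integrand a1 a2 a3 k =
     (1 - k^2) powi a1 * (1 + k - k^2) powi a2 * (1 - 4*k - k^2) powi a3
       / k powi (a1 + a2 + a3 + 1)"

definition special_triples :: "(int \<times> int \<times> int) set" where
  "special_triples =
     {(0,-2,1), (1,0,0), (-2,0,0), (0,1,-2), (1,-4,0), (0,2,1), (-4,1,2), (2,0,-4),
      (0,-5,1), (1,3,0), (-5,0,3), (3,1,-5)}
   \<union> {(0, -2*int m - 2, 2*int m + 1) | m. True}
   \<union> {(2*int m + 1, 0, 0) | m. True}
   \<union> {(-2*int m - 2, 0, 0) | m. True}
   \<union> {(0, 2*int m + 1, -2*int m - 2) | m. True}"

end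

theory Submission
  imports Defs
begin

definition ratD :: "(real \<Rightarrow> real) \<Rightarrow> bool" where
  "ratD F \<longleftrightarrow> (\<exists>p q :: real poly. q \<noteq> 0 \<and> (\<forall>x. poly q x \<noteq> 0 \<longrightarrow> F x = poly p x / poly q x))"

lemma ratD_const[intro]: "ratD (\<lambda>x. c)"
  unfolding ratD_def by (rule exI[of _ "[:c:]"], rule exI[of _ 1]) auto

lemma ratD_id[intro]: "ratD (\<lambda>x. x)"
  unfolding ratD_def by (rule exI[of _ "[:0,1:]"], rule exI[of _ 1]) auto

lemma ratD_add[intro]: assumes "ratD f" "ratD g" shows "ratD (\<lambda>x. f x + g x)"
proof -
  obtain p q where pq: "q \<noteq> 0" "\<forall>x. poly q x \<noteq> 0 \<longrightarrow> f x = poly p x / poly q x"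
    using assms(1) unfolding ratD_def by blast
  obtain r s where rs: "s \<noteq> 0" "\<forall>x. poly s x \<noteq> 0 \<longrightarrow> g x = poly r x / poly s x"
    using assms(2) unfolding ratD_def by blast
  show ?thesis unfolding ratD_def
    apply (rule exI[of _ "p*s + r*q"], rule exI[of _ "q*s"])
    using pq rs by (auto simp: field_simps)
qed

lemma ratD_mult[intro]: assumes "ratD f" "ratD g" shows "ratD (\<lambda>x. f x * g x)"
proof -
  obtain p q where pq: "q \<noteq> 0" "\<forall>x. poly q x \<noteq> 0 \<longrightarrow> f x = poly p x / poly q x"
    using assms(1) unfolding ratD_def by blast
  obtain r s where rs: "s \<noteq> 0" "\<forall>x. poly s x \<noteq> 0 \<longrightarrow> g x = poly r x / poly s x"
    using assms(2) unfolding ratD_def by blast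
  show ?thesis unfolding ratD_def
    apply (rule exI[of _ "p*r"], rule exI[of _ "q*s"])
    using pq rs by (auto simp: field_simps)
qed

lemma ratD_inverse[intro]: assumes "ratD f" shows "ratD (\<lambda>x. inverse (f x))"
proof -
  obtain p q where pq: "q \<noteq> 0" "\<forall>x. poly q x \<noteq> 0 \<longrightarrow> f x = poly p x / poly q x"
    using assms(1) unfolding ratD_def by blast
  show ?thesis
  proof (cases "p = 0")
    case True
    show ?thesis unfolding ratD_def
      apply (rule exI[of _ 0], rule exI[of _ q]) using pq True by auto
  next
    case False
    show ?thesis unfolding ratD_def
    proof (rule exI[of _ "q*q"], rule exI[of _ "p*q"], intro conjI allI impI)
      show "p * q \<noteq> 0" using False pq by auto
      fix x assume "poly (p*q) x \<noteq> 0"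
      then have h: "poly p x \<noteq> 0" "poly q x \<noteq> 0" by auto
      then have "f x = poly p x / poly q x" using pq by auto
      then show "inverse (f x) = poly (q*q) x / poly (p*q) x" using h by simp
    qed
  qed
qed

lemma ratD_minus[intro]: "ratD f \<Longrightarrow> ratD (\<lambda>x. - f x)"
  using ratD_mult[of "\<lambda>x. -1" f] by auto

lemma ratD_diff[intro]: "ratD f \<Longrightarrow> ratD g \<Longrightarrow> ratD (\<lambda>x. f x - g x)"
  using ratD_add[of f "\<lambda>x. - g x"] by auto

lemma ratD_divide[intro]: "ratD f \<Longrightarrow> ratD g \<Longrightarrow> ratD (\<lambda>x. f x / g x)"
  using ratD_mult[of f "\<lambda>x. inverse (g x)"] by (auto simp: divide_inverse)

lemma ratD_power[intro]: "ratD f \<Longrightarrow> ratD (\<lambda>x. f x ^ n)"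
  by (induction n) auto

lemmas ratD_intros = ratD_const ratD_id ratD_add ratD_mult ratD_inverse ratD_minus ratD_diff ratD_divide ratD_power

definition dom0 :: "real set" where
  "dom0 = {k. k \<noteq> 0 \<and> 1 - k^2 \<noteq> 0 \<and> 1 + k - k^2 \<noteq> 0 \<and> 1 - 4*k - k^2 \<noteq> 0}"

lemma alg1:
  fixes P X Y r a b n :: real
  assumes b: "b \<noteq> 0" and n: "n \<ge> 0" and e: "a*(Y*Y) = b*(X*X+4)"
  shows "(-1/(b*(2*n+3))) * ((2*n+2) * (-a*Y*r*P) * Y + (-b*X*r)*(P*X)) - (8*(n+1)/(2*n+3)) * (P*r) = P*X*X*r"
proof -
  have "(2*n+2) * (-a*Y*r*P) * Y = -(2*n+2)*r*P*(a*(Y*Y))" by (simp add: algebra_simps)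
  also have "\<dots> = -(2*n+2)*r*P*(b*(X*X+4))" by (simp only: e)
  finally have h: "(2*n+2) * (-a*Y*r*P) * Y = \<dots>" .
  have d: "2*n+3 \<noteq> 0" using n by linarith
  have h2: "-(2*n+2)*r*P*(b*(X*X+4)) + (-b*X*r)*(P*X) = b * (-((2*n+2)*r*P*(X*X+4) + P*X*X*r))"
    by (simp add: algebra_simps)
  have "(-1/(b*(2*n+3))) * (b * (-((2*n+2)*r*P*(X*X+4) + P*X*X*r))) = ((2*n+2)*r*P*(X*X+4) + P*X*X*r)/(2*n+3)"
    using b by simp (simp add: divide_simps)
  also have "\<dots> - (8*(n+1)/(2*n+3)) * (P*r) = ((2*n+2)*r*P*(X*X+4) + P*X*X*r - 8*(n+1)*(P*r))/(2*n+3)"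
    by (simp add: diff_divide_distrib)
  also have "\<dots> = P*X*X*r" using d by (simp add: field_simps)
  finally show ?thesis unfolding h h2 .
qed

lemma alg2:
  fixes P V Y Yd r a b n :: real
  assumes b: "b \<noteq> 0" and n: "n \<ge> 0" and e: "a*(Y*Y)*(V*V) = b*(1+4*(V*V))" and e2: "V*Yd = -b*r"
  shows "(1/(b*(4*(2*n+3)))) * ((2*n+3) * (a*Y*r*(V*V) * P) * Y + Yd*(P*V)) - ((2*n+2)/(4*(2*n+3))) * (P*r) = P*V*V*r"
proof -
  have "(2*n+3) * (a*Y*r*(V*V) * P) * Y + Yd*(P*V) = (2*n+3)*r*P*(a*(Y*Y)*(V*V)) + P*(V*Yd)" by (simp add: algebra_simps)
  also have "\<dots> = b * ((2*n+3)*r*P*(1+4*(V*V)) - P*r)" unfolding e e2 by (simp add: algebra_simps)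
  finally have h: "(2*n+3) * (a*Y*r*(V*V) * P) * Y + Yd*(P*V) = \<dots>" .
  have d: "2*n+3 \<noteq> 0" using n by linarith
  have "(1/(b*(4*(2*n+3)))) * (b * ((2*n+3)*r*P*(1+4*(V*V)) - P*r)) = ((2*n+3)*r*P*(1+4*(V*V)) - P*r)/(4*(2*n+3))"
    using b by simp
  also have "\<dots> - ((2*n+2)/(4*(2*n+3))) * (P*r) = ((2*n+3)*r*P*(1+4*(V*V)) - P*r - (2*n+2)*(P*r))/(4*(2*n+3))"
    by (simp add: diff_divide_distrib)
  also have "\<dots> = P*V*V*r" using d by (simp add: field_simps)
  finally show ?thesis unfolding h .
qed

lemma fam_pos:
  fixes x y \<rho> :: "real \<Rightarrow> real" and \<alpha> \<beta> :: real
  assumes dx: "\<And>k. k \<in> S \<Longrightarrow> (x has_real_derivative (-\<alpha> * y k * \<rho> k)) (at k)"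
    and dy: "\<And>k. k \<in> S \<Longrightarrow> (y has_real_derivative (-\<beta> * x k * \<rho> k)) (at k)"
    and rel: "\<And>k. k \<in> S \<Longrightarrow> \<alpha> * (y k)^2 = \<beta> * ((x k)^2 + 4)"
    and b: "\<beta> \<noteq> 0" and rx: "ratD x" and ry: "ratD y"
  shows "\<exists>F. ratD F \<and> (\<forall>k\<in>S. (F has_real_derivative (x k ^ (2*m+1) * \<rho> k)) (at k))"
proof (induction m)
  case 0
  show ?case
  proof (intro exI conjI ballI)
    show "ratD (\<lambda>k. - y k / \<beta>)" by (intro ratD_intros ry)
    fix k assume k: "k \<in> S"
    have "((\<lambda>k. - y k / \<beta>) has_real_derivative (- (-\<beta> * x k * \<rho> k) / \<beta>)) (at k)"
      by (auto intro!: derivative_eq_intros dy k)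
    then show "((\<lambda>k. - y k / \<beta>) has_real_derivative (x k ^ (2*0+1) * \<rho> k)) (at k)"
      using b by simp
  qed
next
  case (Suc m)
  then obtain F where F: "ratD F" "\<forall>k\<in>S. (F has_real_derivative (x k ^ (2*m+1) * \<rho> k)) (at k)"
    by blast
  define c1 where "c1 = - 1 / (\<beta> * real (2*m+3))"
  define c2 where "c2 = 8 * real (m+1) / real (2*m+3)"
  define G where "G = (\<lambda>k. c1 * (x k ^ (2*m+2) * y k) - c2 * F k)"
  show ?case
  proof (intro exI conjI ballI)
    show "ratD G" unfolding G_def by (intro ratD_intros F(1) rx ry)
    fix k assume k: "k \<in> S"
    note raw = DERIV_diff[OF DERIV_cmult[OF DERIV_mult[OF DERIV_power[OF dx[OF k], of "2*m+2"] dy[OF k]], of c1]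
         DERIV_cmult[OF F(2)[rule_format, OF k], of c2]]
    show "(G has_real_derivative x k ^ (2*Suc m+1) * \<rho> k) (at k)"
      unfolding G_def
    proof (rule DERIV_cong[OF raw])
      have pw0: "x k ^ (2*m+2 - Suc 0) = x k ^ (2*m+1)" by simp
      have pw1: "x k ^ (2*m+2) = x k ^ (2*m+1) * x k" by simp
      have pw2: "x k ^ (2*Suc m+1) = x k ^ (2*m+1) * x k * x k" by simp
      have e: "\<alpha> * (y k * y k) = \<beta> * (x k * x k + 4)" using rel[OF k] by (simp add: power2_eq_square)
      have rm: "real (2*m+2) = 2 * real m + 2" "real (m+1) = real m + 1" "real (2*m+3) = 2 * real m + 3" by auto
      show "c1 * (real (2*m+2) * (- \<alpha> * y k * \<rho> k * x k ^ (2*m+2 - Suc 0)) * y k +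
          (- \<beta> * x k * \<rho> k) * x k ^ (2*m+2)) - c2 * (x k ^ (2*m+1) * \<rho> k) =
          x k ^ (2*Suc m+1) * \<rho> k"
        unfolding c1_def c2_def pw0 pw1 pw2 rm
        using alg1[of \<beta> "real m" \<alpha> "y k" "x k" "\<rho> k" "x k ^ (2*m+1)", OF b _ e] by simp
    qed
  qed
qed

lemma fam_neg:
  fixes v y Yd \<rho> :: "real \<Rightarrow> real" and \<alpha> \<beta> :: real
  assumes dv: "\<And>k. k \<in> S \<Longrightarrow> (v has_real_derivative (\<alpha> * y k * \<rho> k * (v k * v k))) (at k)"
    and dy: "\<And>k. k \<in> S \<Longrightarrow> (y has_real_derivative Yd k) (at k)"
    and dy2: "\<And>k. k \<in> S \<Longrightarrow> v k * Yd k = - \<beta> * \<rho> k"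
    and rel: "\<And>k. k \<in> S \<Longrightarrow> \<alpha> * (y k * y k) * (v k * v k) = \<beta> * (1 + 4 * (v k * v k))"
    and b: "\<beta> \<noteq> 0" and rv: "ratD v" and ry: "ratD y"
  shows "\<exists>F. ratD F \<and> (\<forall>k\<in>S. (F has_real_derivative (v k ^ (2*m+2) * \<rho> k)) (at k))"
proof (induction m)
  case 0
  show ?case
  proof (intro exI conjI ballI)
    show "ratD (\<lambda>k. (1/(4*\<beta>)) * (v k * y k))" by (intro ratD_intros rv ry)
    fix k assume k: "k \<in> S"
    note raw = DERIV_cmult[OF DERIV_mult[OF dv[OF k] dy[OF k]], of "1/(4*\<beta>)"]
    show "((\<lambda>k. (1/(4*\<beta>)) * (v k * y k)) has_real_derivative (v k ^ (2*0+2) * \<rho> k)) (at k)"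
    proof (rule DERIV_cong[OF raw])
      have "\<alpha> * y k * \<rho> k * (v k * v k) * y k + Yd k * v k = \<rho> k * (\<alpha> * (y k * y k) * (v k * v k)) + v k * Yd k"
        by (simp add: algebra_simps)
      also have "\<dots> = \<beta> * (4 * \<rho> k * (v k * v k))" unfolding rel[OF k] dy2[OF k] by (simp add: algebra_simps)
      finally show "1 / (4 * \<beta>) * (\<alpha> * y k * \<rho> k * (v k * v k) * y k + Yd k * v k) = v k ^ (2 * 0 + 2) * \<rho> k"
        using b by (simp add: power2_eq_square)
    qed
  qed
next
  case (Suc m)
  then obtain F where F: "ratD F" "\<forall>k\<in>S. (F has_real_derivative (v k ^ (2*m+2) * \<rho> k)) (at k)"
    by blast
  define c1 where "c1 = 1 / (\<beta> * (4 * (2 * real m + 3)))"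
  define c2 where "c2 = (2 * real m + 2) / (4 * (2 * real m + 3))"
  define G where "G = (\<lambda>k. c1 * (v k ^ (2*m+3) * y k) - c2 * F k)"
  show ?case
  proof (intro exI conjI ballI)
    show "ratD G" unfolding G_def by (intro ratD_intros F(1) rv ry)
    fix k assume k: "k \<in> S"
    note raw = DERIV_diff[OF DERIV_cmult[OF DERIV_mult[OF DERIV_power[OF dv[OF k], of "2*m+3"] dy[OF k]], of c1]
         DERIV_cmult[OF F(2)[rule_format, OF k], of c2]]
    show "(G has_real_derivative v k ^ (2*Suc m+2) * \<rho> k) (at k)"
      unfolding G_def
    proof (rule DERIV_cong[OF raw])
      have pw0: "v k ^ (2*m+3 - Suc 0) = v k ^ (2*m+2)" by simp
      have pw1: "v k ^ (2*m+3) = v k ^ (2*m+2) * v k"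
      proof -
        have "2*m+3 = (2*m+2)+1" by simp
        then show ?thesis by (simp only: power_add power_one_right)
      qed
      have pw2: "v k ^ (2*Suc m+2) = v k ^ (2*m+2) * v k * v k"
        using power_add[of "v k" "2*m+2" 2] by (simp add: power2_eq_square mult.assoc)
      have rm: "real (2*m+3) = 2 * real m + 3" by auto
      show "c1 * (real (2*m+3) * (\<alpha> * y k * \<rho> k * (v k * v k) * v k ^ (2*m+3 - Suc 0)) * y k +
          Yd k * v k ^ (2*m+3)) - c2 * (v k ^ (2*m+2) * \<rho> k) =
          v k ^ (2*Suc m+2) * \<rho> k"
        unfolding c1_def c2_def pw0 pw1 pw2 rm
        using alg2[of \<beta> "real m" \<alpha> "y k" "v k" "Yd k" "\<rho> k" "v k ^ (2*m+2)", OF b _ rel[OF k] dy2[OF k]]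
        by simp
    qed
  qed
qed

lemma integrand_u:
  assumes "k \<noteq> 0"
  shows "integrand a1 a2 a3 k = (1/k - k) powi a1 * (1/k - k + 1) powi a2 * (1/k - k - 4) powi a3 / k"
proof -
  have A: "1 - k^2 = k * (1/k - k)" and B: "1 + k - k^2 = k * (1/k - k + 1)" and C: "1 - 4*k - k^2 = k * (1/k - k - 4)"
    using assms by (auto simp: field_simps power2_eq_square)
  have K: "k powi (a1 + a2 + a3 + 1) = k powi a1 * k powi a2 * k powi a3 * k"
    using assms by (simp add: power_int_add)
  show ?thesis unfolding integrand_def A B C K power_int_mult_distrib using assms
    by (simp add: field_simps power_int_not_zero)
qed

lemma via_g:
  fixes g :: "real \<Rightarrow> real"
  assumes k: "k \<noteq> 0" and dg: "(g has_real_derivative g') (at (1/k - k))"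
    and id: "((1/k - k)^2 + 4) * g' + (1/k - k) * g (1/k - k) = - f"
  shows "((\<lambda>x. g (1/x - x) * (1/x + x)) has_real_derivative f / k) (at k)"
proof -
  have du: "((\<lambda>x. 1/x - x) has_real_derivative (- (1/k + k) / k)) (at k)"
    using k by (auto intro!: derivative_eq_intros simp: field_simps power2_eq_square)
  have dw: "((\<lambda>x. 1/x + x) has_real_derivative (- (1/k - k) / k)) (at k)"
    using k by (auto intro!: derivative_eq_intros simp: field_simps power2_eq_square)
  note raw = DERIV_mult[OF DERIV_chain2[OF dg du] dw]
  show ?thesis
  proof (rule DERIV_cong[OF raw])
    have "(1/k + k)^2 = (1/k - k)^2 + 4" using k by (simp add: field_simps power2_eq_square)
    then have "g' * (- (1 / k + k) / k) * (1 / k + k) + (- (1 / k - k) / k) * g (1 / k - k)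
      = - (((1/k - k)^2 + 4) * g' + (1/k - k) * g (1/k - k)) / k"
      by (simp add: field_simps power2_eq_square)
    then show "g' * (- (1 / k + k) / k) * (1 / k + k) + (- (1 / k - k) / k) * g (1 / k - k) = f / k"
      unfolding id by simp
  qed
qed

lemma dA: "((\<lambda>k. 1 - k^2) has_real_derivative (- 2*k)) (at k)"
  by (auto intro!: derivative_eq_intros)
lemma dB: "((\<lambda>k. 1 + k - k^2) has_real_derivative (1 - 2*k)) (at k)"
  by (auto intro!: derivative_eq_intros)
lemma dC: "((\<lambda>k. 1 - 4*k - k^2) has_real_derivative (- 4 - 2*k)) (at k)"
  by (auto intro!: derivative_eq_intros)
lemma dQ: "((\<lambda>k. 1 + k^2) has_real_derivative (2*k)) (at k)"
  by (auto intro!: derivative_eq_intros)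

lemma fam1: "\<exists>F. ratD F \<and> (\<forall>k\<in>dom0. (F has_real_derivative integrand (2*int m+1) 0 0 k) (at k))"
proof -
  have "\<exists>F. ratD F \<and> (\<forall>k\<in>dom0. (F has_real_derivative ((\<lambda>k. 1/k - k) k ^ (2*m+1) * (\<lambda>k. 1/k) k)) (at k))"
  proof (rule fam_pos[where y = "\<lambda>k. 1/k + k" and \<alpha> = 1 and \<beta> = 1])
    fix k assume k: "k \<in> dom0"
    then have k0: "k \<noteq> 0" by (simp add: dom0_def)
    show "((\<lambda>k. 1/k - k) has_real_derivative (- 1 * (1/k + k) * (1/k))) (at k)"
      using k0 by (auto intro!: derivative_eq_intros simp: field_simps power2_eq_square)
    show "((\<lambda>k. 1/k + k) has_real_derivative (- 1 * (1/k - k) * (1/k))) (at k)"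
      using k0 by (auto intro!: derivative_eq_intros simp: field_simps power2_eq_square)
    show "1 * (1/k + k)^2 = 1 * ((1/k - k)^2 + 4)"
      using k0 by (simp add: field_simps power2_eq_square)
  qed (auto intro!: ratD_intros)
  moreover have "integrand (2*int m+1) 0 0 k = (1/k - k) ^ (2*m+1) * (1/k)" if "k \<in> dom0" for k
  proof -
    have e: "int (2*m+1) = 2*int m+1" by simp
    have p: "(1/k - k) powi (2*int m+1) = (1/k - k) ^ (2*m+1)"
      by (metis e power_int_of_nat)
    have k0: "k \<noteq> 0" using that by (simp add: dom0_def)
    show ?thesis unfolding integrand_u[OF k0] p by simp
  qed
  ultimately show ?thesis by (metis (no_types, lifting))
qed

lemma fam2: "\<exists>F. ratD F \<and> (\<forall>k\<in>dom0. (F has_real_derivative integrand (-2*int m-2) 0 0 k) (at k))"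
proof -
  have "\<exists>F. ratD F \<and> (\<forall>k\<in>dom0. (F has_real_derivative ((\<lambda>k. k / (1 - k^2)) k ^ (2*m+2) * (\<lambda>k. 1/k) k)) (at k))"
  proof (rule fam_neg[where y = "\<lambda>k. 1/k + k" and Yd = "\<lambda>k. 1 - 1/k^2" and \<alpha> = 1 and \<beta> = 1])
    fix k assume k: "k \<in> dom0"
    then have k0: "k \<noteq> 0" and k1: "1 - k^2 \<noteq> 0" by (auto simp: dom0_def)
    note raw = DERIV_divide[OF DERIV_ident dA k1]
    show "((\<lambda>k. k / (1 - k^2)) has_real_derivative (1 * (1/k + k) * (1/k) * (k / (1 - k^2) * (k / (1 - k^2))))) (at k)"
    proof (rule DERIV_cong[OF raw])
      have h: "1 * (1 - k^2) - k * (- 2 * k) = 1 + k^2" by (simp add: algebra_simps power2_eq_square)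
      have g: "\<And>A. A \<noteq> 0 \<Longrightarrow> (1 + k^2) / (A * A) = 1 * (1/k + k) * (1/k) * (k / A * (k / A))"
        using k0 by (simp add: field_simps power2_eq_square)
      show "(1 * (1 - k^2) - k * (- 2 * k)) / ((1 - k^2) * (1 - k^2)) = 1 * (1/k + k) * (1/k) * (k / (1 - k^2) * (k / (1 - k^2)))"
        unfolding h by (rule g[OF k1])
    qed
    show "((\<lambda>k. 1/k + k) has_real_derivative (1 - 1/k^2)) (at k)"
      using k0 by (auto intro!: derivative_eq_intros simp: field_simps power2_eq_square)
    show "k / (1 - k^2) * (1 - 1/k^2) = - 1 * (1/k)"
      using k0 k1 by (simp add: field_simps power2_eq_square)
    have g2: "1 * ((1/k + k) * (1/k + k)) * (k / A * (k / A)) = 1 * (1 + 4 * (k / A * (k / A)))"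
      if A: "A \<noteq> 0" and h: "A^2 + 4*k^2 = (1+k^2)^2" for A
    proof -
      have "1 * ((1/k + k) * (1/k + k)) * (k / A * (k / A)) = (1+k^2)^2 / A^2"
        using k0 A by (simp add: field_simps power2_eq_square)
      also have "\<dots> = (A^2 + 4*k^2) / A^2" unfolding h ..
      also have "\<dots> = 1 * (1 + 4 * (k / A * (k / A)))" using A by (simp add: field_simps power2_eq_square)
      finally show ?thesis .
    qed
    show "1 * ((1/k + k) * (1/k + k)) * (k / (1 - k^2) * (k / (1 - k^2))) = 1 * (1 + 4 * (k / (1 - k^2) * (k / (1 - k^2))))"
      by (rule g2[OF k1]) (simp add: algebra_simps power2_eq_square)
  qed (auto intro!: ratD_intros)
  moreover have "integrand (-2*int m-2) 0 0 k = (k / (1 - k^2)) ^ (2*m+2) * (1/k)" if "k \<in> dom0" for k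
  proof -
    have e: "- int (2*m+2) = -2*int m-2" by simp
    have p: "(1/k - k) powi (-2*int m-2) = (k / (1 - k^2)) ^ (2*m+2)"
    proof -
      have "(1/k - k) powi (-2*int m-2) = inverse ((1/k - k) ^ (2*m+2))"
        by (metis e power_int_minus power_int_of_nat)
      also have "inverse (1/k - k) = k / (1 - k^2)" using that
        by (simp add: dom0_def field_simps power2_eq_square)
      then have "inverse ((1/k - k) ^ (2*m+2)) = (k / (1 - k^2)) ^ (2*m+2)"
        by (metis power_inverse)
      finally show ?thesis .
    qed
    have k0: "k \<noteq> 0" using that by (simp add: dom0_def)
    show ?thesis unfolding integrand_u[OF k0] p by simp
  qed
  ultimately show ?thesis by (metis (no_types, lifting))
qed

lemma algB1: "B \<noteq> 0 \<Longrightarrow> N = -5*Q \<Longrightarrow> N / (B*B) = - 5 * (Q / B) * (1 / (B::real))"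
  by (simp add: field_simps)
lemma algB2: "B \<noteq> 0 \<Longrightarrow> N = -C \<Longrightarrow> N / (B*B) = - 1 * (C / B) * (1 / (B::real))"
  by (simp add: field_simps)
lemma algB3: "B \<noteq> 0 \<Longrightarrow> C^2 + 4*B^2 = 5*Q^2 \<Longrightarrow> 5 * (Q / B)^2 = 1 * ((C / B)^2 + (4::real))"
  by (simp add: field_simps power2_eq_square)
lemma algB4: "B \<noteq> 0 \<Longrightarrow> C \<noteq> 0 \<Longrightarrow> N = 5*Q \<Longrightarrow> N / (C*C) = 5 * (Q / B) * (1 / B) * (B / C * (B / (C::real)))"
  by (simp add: field_simps)
lemma algB5: "B \<noteq> 0 \<Longrightarrow> C \<noteq> 0 \<Longrightarrow> N = -C \<Longrightarrow> B / C * (N / (B*B)) = - 1 * (1 / (B::real))"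
  by (simp add: field_simps)
lemma algB6: "B \<noteq> 0 \<Longrightarrow> C \<noteq> 0 \<Longrightarrow> C^2 + 4*B^2 = 5*Q^2 \<Longrightarrow>
   5 * (Q / B * (Q / B)) * (B / C * (B / C)) = 1 * (1 + 4 * (B / C * (B / (C::real))))"
  by (simp add: field_simps power2_eq_square)

lemma relBC: "(1 - 4*k - k^2)^2 + 4*(1 + k - k^2)^2 = 5*(1 + k^2)^2" for k :: real
  by (simp add: algebra_simps power2_eq_square)

lemma fam3: "\<exists>F. ratD F \<and> (\<forall>k\<in>dom0. (F has_real_derivative integrand 0 (-2*int m-2) (2*int m+1) k) (at k))"
proof -
  have "\<exists>F. ratD F \<and> (\<forall>k\<in>dom0. (F has_real_derivative ((\<lambda>k. (1 - 4*k - k^2) / (1 + k - k^2)) k ^ (2*m+1) * (\<lambda>k. 1 / (1 + k - k^2)) k)) (at k))"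
  proof (rule fam_pos[where y = "\<lambda>k. (1 + k^2) / (1 + k - k^2)" and \<alpha> = 5 and \<beta> = 1])
    fix k assume k: "k \<in> dom0"
    then have kb: "1 + k - k^2 \<noteq> 0" by (auto simp: dom0_def)
    show "((\<lambda>k. (1 - 4*k - k^2) / (1 + k - k^2)) has_real_derivative (- 5 * ((1 + k^2) / (1 + k - k^2)) * (1 / (1 + k - k^2)))) (at k)"
      by (rule DERIV_cong[OF DERIV_divide[OF dC dB kb]], rule algB1[OF kb])
         (simp add: algebra_simps power2_eq_square)
    show "((\<lambda>k. (1 + k^2) / (1 + k - k^2)) has_real_derivative (- 1 * ((1 - 4*k - k^2) / (1 + k - k^2)) * (1 / (1 + k - k^2)))) (at k)"
      by (rule DERIV_cong[OF DERIV_divide[OF dQ dB kb]], rule algB2[OF kb])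
         (simp add: algebra_simps power2_eq_square)
    show "5 * ((1 + k^2) / (1 + k - k^2))^2 = 1 * (((1 - 4*k - k^2) / (1 + k - k^2))^2 + 4)"
      by (rule algB3[OF kb relBC])
  qed (auto intro!: ratD_intros)
  moreover have "integrand 0 (-2*int m-2) (2*int m+1) k = ((1 - 4*k - k^2) / (1 + k - k^2)) ^ (2*m+1) * (1 / (1 + k - k^2))" if "k \<in> dom0" for k
  proof -
    have e1: "- int (2*m+2) = -2*int m-2" "int (2*m+1) = 2*int m+1" by simp_all
    have e2: "0 + (-2*int m-2) + (2*int m+1) + 1 = 0" by simp
    have p1: "(1 + k - k^2) powi (-2*int m-2) = inverse ((1 + k - k^2) ^ (2*m+2))"
      by (metis e1(1) power_int_minus power_int_of_nat)
    have p2: "(1 - 4*k - k^2) powi (2*int m+1) = (1 - 4*k - k^2) ^ (2*m+1)"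
      by (metis e1(2) power_int_of_nat)
    show ?thesis using that unfolding integrand_def e2 p1 p2
      by (simp add: dom0_def field_simps power_divide)
  qed
  ultimately show ?thesis by (metis (no_types, lifting))
qed

lemma fam4: "\<exists>F. ratD F \<and> (\<forall>k\<in>dom0. (F has_real_derivative integrand 0 (2*int m+1) (-2*int m-2) k) (at k))"
proof -
  have "\<exists>F. ratD F \<and> (\<forall>k\<in>dom0. (F has_real_derivative ((\<lambda>k. (1 + k - k^2) / (1 - 4*k - k^2)) k ^ (2*m+2) * (\<lambda>k. 1 / (1 + k - k^2)) k)) (at k))"
  proof (rule fam_neg[where y = "\<lambda>k. (1 + k^2) / (1 + k - k^2)"
        and Yd = "\<lambda>k. (2*k * (1 + k - k^2) - (1 + k^2) * (1 - 2*k)) / ((1 + k - k^2) * (1 + k - k^2))" and \<alpha> = 5 and \<beta> = 1])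
    fix k assume k: "k \<in> dom0"
    then have kb: "1 + k - k^2 \<noteq> 0" and kc: "1 - 4*k - k^2 \<noteq> 0" by (auto simp: dom0_def)
    show "((\<lambda>k. (1 + k - k^2) / (1 - 4*k - k^2)) has_real_derivative (5 * ((1 + k^2) / (1 + k - k^2)) * (1 / (1 + k - k^2)) * ((1 + k - k^2) / (1 - 4*k - k^2) * ((1 + k - k^2) / (1 - 4*k - k^2))))) (at k)"
      by (rule DERIV_cong[OF DERIV_divide[OF dB dC kc]], rule algB4[OF kb kc])
         (simp add: algebra_simps power2_eq_square)
    show "((\<lambda>k. (1 + k^2) / (1 + k - k^2)) has_real_derivative ((2*k * (1 + k - k^2) - (1 + k^2) * (1 - 2*k)) / ((1 + k - k^2) * (1 + k - k^2)))) (at k)"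
      by (rule DERIV_divide[OF dQ dB kb])
    show "(1 + k - k^2) / (1 - 4*k - k^2) * ((2*k * (1 + k - k^2) - (1 + k^2) * (1 - 2*k)) / ((1 + k - k^2) * (1 + k - k^2))) = - 1 * (1 / (1 + k - k^2))"
      by (rule algB5[OF kb kc]) (simp add: algebra_simps power2_eq_square)
    show "5 * ((1 + k^2) / (1 + k - k^2) * ((1 + k^2) / (1 + k - k^2))) * ((1 + k - k^2) / (1 - 4*k - k^2) * ((1 + k - k^2) / (1 - 4*k - k^2)))
        = 1 * (1 + 4 * ((1 + k - k^2) / (1 - 4*k - k^2) * ((1 + k - k^2) / (1 - 4*k - k^2))))"
      by (rule algB6[OF kb kc relBC])
  qed (auto intro!: ratD_intros)
  moreover have "integrand 0 (2*int m+1) (-2*int m-2) k = ((1 + k - k^2) / (1 - 4*k - k^2)) ^ (2*m+2) * (1 / (1 + k - k^2))" if "k \<in> dom0" for k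
  proof -
    have e1: "- int (2*m+2) = -2*int m-2" "int (2*m+1) = 2*int m+1" by simp_all
    have e2: "0 + (2*int m+1) + (-2*int m-2) + 1 = 0" by simp
    have p1: "(1 - 4*k - k^2) powi (-2*int m-2) = inverse ((1 - 4*k - k^2) ^ (2*m+2))"
      by (metis e1(1) power_int_minus power_int_of_nat)
    have p2: "(1 + k - k^2) powi (2*int m+1) = (1 + k - k^2) ^ (2*m+1)"
      by (metis e1(2) power_int_of_nat)
    have kb: "1 + k - k^2 \<noteq> 0" using that by (auto simp: dom0_def)
    have g: "(B/C)^(n+1) * (1/B) = B^n * inverse (C^(n+1))" if "B \<noteq> 0" for B C :: real and n
      using that by (simp add: power_divide field_simps)
    show ?thesis unfolding integrand_def e2 p1 p2 using g[OF kb, of "1 - 4*k - k^2" "2*m+1"]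
      by simp
  qed
  ultimately show ?thesis by (metis (no_types, lifting))
qed

lemma sp0: "\<exists>F. ratD F \<and> (\<forall>k\<in>dom0. (F has_real_derivative integrand (1) (-4) (0) k) (at k))"
proof -
  define g where "g = (\<lambda>t::real. ((1/15) + (1/5)*t + (1/15)*t^2) / ((t+1)^3))"
  define G where "G = (\<lambda>t::real. ((-4/15)*t + (-3/5)*t^2 + (-2/5)*t^3 + (-1/15)*t^4) / ((t+1)^3)^2)"
  define f where "f = (\<lambda>t::real. (t) / ((t+1)^4))"
  have dg: "(g has_real_derivative G t) (at t)" if "t \<noteq> 0" "t + 1 \<noteq> 0" "t - 4 \<noteq> 0" for t
    unfolding g_def G_def using that
    by (auto intro!: derivative_eq_intros simp: field_simps) (algebra)?
  have idt: "(t^2 + 4) * G t + t * g t = - f t" if "t \<noteq> 0" "t + 1 \<noteq> 0" "t - 4 \<noteq> 0" for t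
    unfolding g_def G_def f_def using that
    by (simp add: field_simps) (algebra)?
  show ?thesis
  proof (intro exI conjI ballI)
    show "ratD (\<lambda>x. g (1/x - x) * (1/x + x))" unfolding g_def by (intro ratD_intros)
    fix k assume k: "k \<in> dom0"
    then have k0: "k \<noteq> 0" and h0: "1/k - k \<noteq> 0" and h1: "1/k - k + 1 \<noteq> 0" and h4: "1/k - k - 4 \<noteq> 0"
      by (auto simp: dom0_def field_simps power2_eq_square)
    have "((\<lambda>x. g (1/x - x) * (1/x + x)) has_real_derivative f (1/k - k) / k) (at k)"
      by (rule via_g[OF k0 dg[OF h0 h1 h4]]) (use idt[OF h0 h1 h4] in \<open>simp add: power2_eq_square\<close>)
    moreover have "integrand (1) (-4) (0) k = f (1/k - k) / k"
      unfolding integrand_u[OF k0] f_def by (simp add: power_int_minus field_simps)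
    ultimately show "((\<lambda>x. g (1/x - x) * (1/x + x)) has_real_derivative integrand (1) (-4) (0) k) (at k)"
      by simp
  qed
qed

lemma sp1: "\<exists>F. ratD F \<and> (\<forall>k\<in>dom0. (F has_real_derivative integrand (0) (2) (1) k) (at k))"
proof -
  define g where "g = (\<lambda>t::real. ((29/3) + (1)*t + (-1/3)*t^2) / (1))"
  define G where "G = (\<lambda>t::real. ((1) + (-2/3)*t) / (1)^2)"
  define f where "f = (\<lambda>t::real. ((t+1)^2 * (t-4)) / (1))"
  have dg: "(g has_real_derivative G t) (at t)" if "t \<noteq> 0" "t + 1 \<noteq> 0" "t - 4 \<noteq> 0" for t
    unfolding g_def G_def using that
    by (auto intro!: derivative_eq_intros simp: field_simps) (algebra)?
  have idt: "(t^2 + 4) * G t + t * g t = - f t" if "t \<noteq> 0" "t + 1 \<noteq> 0" "t - 4 \<noteq> 0" for t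
    unfolding g_def G_def f_def using that
    by (simp add: field_simps) (algebra)?
  show ?thesis
  proof (intro exI conjI ballI)
    show "ratD (\<lambda>x. g (1/x - x) * (1/x + x))" unfolding g_def by (intro ratD_intros)
    fix k assume k: "k \<in> dom0"
    then have k0: "k \<noteq> 0" and h0: "1/k - k \<noteq> 0" and h1: "1/k - k + 1 \<noteq> 0" and h4: "1/k - k - 4 \<noteq> 0"
      by (auto simp: dom0_def field_simps power2_eq_square)
    have "((\<lambda>x. g (1/x - x) * (1/x + x)) has_real_derivative f (1/k - k) / k) (at k)"
      by (rule via_g[OF k0 dg[OF h0 h1 h4]]) (use idt[OF h0 h1 h4] in \<open>simp add: power2_eq_square\<close>)
    moreover have "integrand (0) (2) (1) k = f (1/k - k) / k"
      unfolding integrand_u[OF k0] f_def by (simp add: power_int_minus field_simps)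
    ultimately show "((\<lambda>x. g (1/x - x) * (1/x + x)) has_real_derivative integrand (0) (2) (1) k) (at k)"
      by simp
  qed
qed

lemma sp2: "\<exists>F. ratD F \<and> (\<forall>k\<in>dom0. (F has_real_derivative integrand (-4) (1) (2) k) (at k))"
proof -
  define g where "g = (\<lambda>t::real. ((4/3) + (1)*t + (-29/12)*t^2) / (t^3))"
  define G where "G = (\<lambda>t::real. ((-4)*t^2 + (-2)*t^3 + (29/12)*t^4) / (t^3)^2)"
  define f where "f = (\<lambda>t::real. ((t+1) * (t-4)^2) / (t^4))"
  have dg: "(g has_real_derivative G t) (at t)" if "t \<noteq> 0" "t + 1 \<noteq> 0" "t - 4 \<noteq> 0" for t
    unfolding g_def G_def using that
    by (auto intro!: derivative_eq_intros simp: field_simps) (algebra)?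
  have idt: "(t^2 + 4) * G t + t * g t = - f t" if "t \<noteq> 0" "t + 1 \<noteq> 0" "t - 4 \<noteq> 0" for t
    unfolding g_def G_def f_def using that
    by (simp add: field_simps) (algebra)?
  show ?thesis
  proof (intro exI conjI ballI)
    show "ratD (\<lambda>x. g (1/x - x) * (1/x + x))" unfolding g_def by (intro ratD_intros)
    fix k assume k: "k \<in> dom0"
    then have k0: "k \<noteq> 0" and h0: "1/k - k \<noteq> 0" and h1: "1/k - k + 1 \<noteq> 0" and h4: "1/k - k - 4 \<noteq> 0"
      by (auto simp: dom0_def field_simps power2_eq_square)
    have "((\<lambda>x. g (1/x - x) * (1/x + x)) has_real_derivative f (1/k - k) / k) (at k)"
      by (rule via_g[OF k0 dg[OF h0 h1 h4]]) (use idt[OF h0 h1 h4] in \<open>simp add: power2_eq_square\<close>)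
    moreover have "integrand (-4) (1) (2) k = f (1/k - k) / k"
      unfolding integrand_u[OF k0] f_def by (simp add: power_int_minus field_simps)
    ultimately show "((\<lambda>x. g (1/x - x) * (1/x + x)) has_real_derivative integrand (-4) (1) (2) k) (at k)"
      by simp
  qed
qed

lemma sp3: "\<exists>F. ratD F \<and> (\<forall>k\<in>dom0. (F has_real_derivative integrand (2) (0) (-4) k) (at k))"
proof -
  define g where "g = (\<lambda>t::real. ((-4/15) + (1/5)*t + (-1/60)*t^2) / ((t-4)^3))"
  define G where "G = (\<lambda>t::real. ((-64/15)*t + (12/5)*t^2 + (-2/5)*t^3 + (1/60)*t^4) / ((t-4)^3)^2)"
  define f where "f = (\<lambda>t::real. (t^2) / ((t-4)^4))"
  have dg: "(g has_real_derivative G t) (at t)" if "t \<noteq> 0" "t + 1 \<noteq> 0" "t - 4 \<noteq> 0" for t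
    unfolding g_def G_def using that
    by (auto intro!: derivative_eq_intros simp: field_simps) (algebra)?
  have idt: "(t^2 + 4) * G t + t * g t = - f t" if "t \<noteq> 0" "t + 1 \<noteq> 0" "t - 4 \<noteq> 0" for t
    unfolding g_def G_def f_def using that
    by (simp add: field_simps) (algebra)?
  show ?thesis
  proof (intro exI conjI ballI)
    show "ratD (\<lambda>x. g (1/x - x) * (1/x + x))" unfolding g_def by (intro ratD_intros)
    fix k assume k: "k \<in> dom0"
    then have k0: "k \<noteq> 0" and h0: "1/k - k \<noteq> 0" and h1: "1/k - k + 1 \<noteq> 0" and h4: "1/k - k - 4 \<noteq> 0"
      by (auto simp: dom0_def field_simps power2_eq_square)
    have "((\<lambda>x. g (1/x - x) * (1/x + x)) has_real_derivative f (1/k - k) / k) (at k)"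
      by (rule via_g[OF k0 dg[OF h0 h1 h4]]) (use idt[OF h0 h1 h4] in \<open>simp add: power2_eq_square\<close>)
    moreover have "integrand (2) (0) (-4) k = f (1/k - k) / k"
      unfolding integrand_u[OF k0] f_def by (simp add: power_int_minus field_simps)
    ultimately show "((\<lambda>x. g (1/x - x) * (1/x + x)) has_real_derivative integrand (2) (0) (-4) k) (at k)"
      by simp
  qed
qed

lemma sp4: "\<exists>F. ratD F \<and> (\<forall>k\<in>dom0. (F has_real_derivative integrand (0) (-5) (1) k) (at k))"
proof -
  define g where "g = (\<lambda>t::real. ((-1/5) + (1/5)*t + (1/5)*t^2 + (1/20)*t^3) / ((t+1)^4))"
  define G where "G = (\<lambda>t::real. ((1) + (14/5)*t + (43/20)*t^2 + (-2/5)*t^3 + (-11/10)*t^4 + (-2/5)*t^5 + (-1/20)*t^6) / ((t+1)^4)^2)"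
  define f where "f = (\<lambda>t::real. ((t-4)) / ((t+1)^5))"
  have dg: "(g has_real_derivative G t) (at t)" if "t \<noteq> 0" "t + 1 \<noteq> 0" "t - 4 \<noteq> 0" for t
    unfolding g_def G_def using that
    by (auto intro!: derivative_eq_intros simp: field_simps) (algebra)?
  have idt: "(t^2 + 4) * G t + t * g t = - f t" if "t \<noteq> 0" "t + 1 \<noteq> 0" "t - 4 \<noteq> 0" for t
    unfolding g_def G_def f_def using that
    by (simp add: field_simps) (algebra)?
  show ?thesis
  proof (intro exI conjI ballI)
    show "ratD (\<lambda>x. g (1/x - x) * (1/x + x))" unfolding g_def by (intro ratD_intros)
    fix k assume k: "k \<in> dom0"
    then have k0: "k \<noteq> 0" and h0: "1/k - k \<noteq> 0" and h1: "1/k - k + 1 \<noteq> 0" and h4: "1/k - k - 4 \<noteq> 0"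
      by (auto simp: dom0_def field_simps power2_eq_square)
    have "((\<lambda>x. g (1/x - x) * (1/x + x)) has_real_derivative f (1/k - k) / k) (at k)"
      by (rule via_g[OF k0 dg[OF h0 h1 h4]]) (use idt[OF h0 h1 h4] in \<open>simp add: power2_eq_square\<close>)
    moreover have "integrand (0) (-5) (1) k = f (1/k - k) / k"
      unfolding integrand_u[OF k0] f_def by (simp add: power_int_minus field_simps)
    ultimately show "((\<lambda>x. g (1/x - x) * (1/x + x)) has_real_derivative integrand (0) (-5) (1) k) (at k)"
      by simp
  qed
qed

lemma sp5: "\<exists>F. ratD F \<and> (\<forall>k\<in>dom0. (F has_real_derivative integrand (1) (3) (0) k) (at k))"
proof -
  define g where "g = (\<lambda>t::real. ((7) + (-1)*t^2 + (-1/4)*t^3) / (1))"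
  define G where "G = (\<lambda>t::real. ((-2)*t + (-3/4)*t^2) / (1)^2)"
  define f where "f = (\<lambda>t::real. (t * (t+1)^3) / (1))"
  have dg: "(g has_real_derivative G t) (at t)" if "t \<noteq> 0" "t + 1 \<noteq> 0" "t - 4 \<noteq> 0" for t
    unfolding g_def G_def using that
    by (auto intro!: derivative_eq_intros simp: field_simps) (algebra)?
  have idt: "(t^2 + 4) * G t + t * g t = - f t" if "t \<noteq> 0" "t + 1 \<noteq> 0" "t - 4 \<noteq> 0" for t
    unfolding g_def G_def f_def using that
    by (simp add: field_simps) (algebra)?
  show ?thesis
  proof (intro exI conjI ballI)
    show "ratD (\<lambda>x. g (1/x - x) * (1/x + x))" unfolding g_def by (intro ratD_intros)
    fix k assume k: "k \<in> dom0"
    then have k0: "k \<noteq> 0" and h0: "1/k - k \<noteq> 0" and h1: "1/k - k + 1 \<noteq> 0" and h4: "1/k - k - 4 \<noteq> 0"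
      by (auto simp: dom0_def field_simps power2_eq_square)
    have "((\<lambda>x. g (1/x - x) * (1/x + x)) has_real_derivative f (1/k - k) / k) (at k)"
      by (rule via_g[OF k0 dg[OF h0 h1 h4]]) (use idt[OF h0 h1 h4] in \<open>simp add: power2_eq_square\<close>)
    moreover have "integrand (1) (3) (0) k = f (1/k - k) / k"
      unfolding integrand_u[OF k0] f_def by (simp add: power_int_minus field_simps)
    ultimately show "((\<lambda>x. g (1/x - x) * (1/x + x)) has_real_derivative integrand (1) (3) (0) k) (at k)"
      by simp
  qed
qed

lemma sp6: "\<exists>F. ratD F \<and> (\<forall>k\<in>dom0. (F has_real_derivative integrand (-5) (0) (3) k) (at k))"
proof -
  define g where "g = (\<lambda>t::real. ((-4) + (4)*t + (-7/4)*t^3) / (t^4))"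
  define G where "G = (\<lambda>t::real. ((16)*t^3 + (-12)*t^4 + (7/4)*t^6) / (t^4)^2)"
  define f where "f = (\<lambda>t::real. ((t-4)^3) / (t^5))"
  have dg: "(g has_real_derivative G t) (at t)" if "t \<noteq> 0" "t + 1 \<noteq> 0" "t - 4 \<noteq> 0" for t
    unfolding g_def G_def using that
    by (auto intro!: derivative_eq_intros simp: field_simps) (algebra)?
  have idt: "(t^2 + 4) * G t + t * g t = - f t" if "t \<noteq> 0" "t + 1 \<noteq> 0" "t - 4 \<noteq> 0" for t
    unfolding g_def G_def f_def using that
    by (simp add: field_simps) (algebra)?
  show ?thesis
  proof (intro exI conjI ballI)
    show "ratD (\<lambda>x. g (1/x - x) * (1/x + x))" unfolding g_def by (intro ratD_intros)
    fix k assume k: "k \<in> dom0"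
    then have k0: "k \<noteq> 0" and h0: "1/k - k \<noteq> 0" and h1: "1/k - k + 1 \<noteq> 0" and h4: "1/k - k - 4 \<noteq> 0"
      by (auto simp: dom0_def field_simps power2_eq_square)
    have "((\<lambda>x. g (1/x - x) * (1/x + x)) has_real_derivative f (1/k - k) / k) (at k)"
      by (rule via_g[OF k0 dg[OF h0 h1 h4]]) (use idt[OF h0 h1 h4] in \<open>simp add: power2_eq_square\<close>)
    moreover have "integrand (-5) (0) (3) k = f (1/k - k) / k"
      unfolding integrand_u[OF k0] f_def by (simp add: power_int_minus field_simps)
    ultimately show "((\<lambda>x. g (1/x - x) * (1/x + x)) has_real_derivative integrand (-5) (0) (3) k) (at k)"
      by simp
  qed
qed

lemma sp7: "\<exists>F. ratD F \<and> (\<forall>k\<in>dom0. (F has_real_derivative integrand (3) (1) (-5) k) (at k))"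
proof -
  define g where "g = (\<lambda>t::real. ((4/5) + (-4/5)*t + (1/5)*t^2 + (1/20)*t^3) / ((t-4)^4))"
  define G where "G = (\<lambda>t::real. ((-256/5)*t + (512/5)*t^2 + (-272/5)*t^3 + (52/5)*t^4 + (-2/5)*t^5 + (-1/20)*t^6) / ((t-4)^4)^2)"
  define f where "f = (\<lambda>t::real. (t^3 * (t+1)) / ((t-4)^5))"
  have dg: "(g has_real_derivative G t) (at t)" if "t \<noteq> 0" "t + 1 \<noteq> 0" "t - 4 \<noteq> 0" for t
    unfolding g_def G_def using that
    by (auto intro!: derivative_eq_intros simp: field_simps) (algebra)?
  have idt: "(t^2 + 4) * G t + t * g t = - f t" if "t \<noteq> 0" "t + 1 \<noteq> 0" "t - 4 \<noteq> 0" for t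
    unfolding g_def G_def f_def using that
    by (simp add: field_simps) (algebra)?
  show ?thesis
  proof (intro exI conjI ballI)
    show "ratD (\<lambda>x. g (1/x - x) * (1/x + x))" unfolding g_def by (intro ratD_intros)
    fix k assume k: "k \<in> dom0"
    then have k0: "k \<noteq> 0" and h0: "1/k - k \<noteq> 0" and h1: "1/k - k + 1 \<noteq> 0" and h4: "1/k - k - 4 \<noteq> 0"
      by (auto simp: dom0_def field_simps power2_eq_square)
    have "((\<lambda>x. g (1/x - x) * (1/x + x)) has_real_derivative f (1/k - k) / k) (at k)"
      by (rule via_g[OF k0 dg[OF h0 h1 h4]]) (use idt[OF h0 h1 h4] in \<open>simp add: power2_eq_square\<close>)
    moreover have "integrand (3) (1) (-5) k = f (1/k - k) / k"
      unfolding integrand_u[OF k0] f_def by (simp add: power_int_minus field_simps)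
    ultimately show "((\<lambda>x. g (1/x - x) * (1/x + x)) has_real_derivative integrand (3) (1) (-5) k) (at k)"
      by simp
  qed
qed

lemma finish:
  assumes "ratD F" "\<forall>k\<in>dom0. (F has_real_derivative integrand a1 a2 a3 k) (at k)"
  shows "\<exists>p q :: real poly. q \<noteq> 0 \<and>
           (\<forall>k. poly q k \<noteq> 0 \<and> k \<noteq> 0 \<and> 1 - k^2 \<noteq> 0 \<and> 1 + k - k^2 \<noteq> 0
                 \<and> 1 - 4*k - k^2 \<noteq> 0 \<longrightarrow>
              ((\<lambda>x. poly p x / poly q x) has_real_derivative integrand a1 a2 a3 k) (at k))"
proof -
  obtain p q where pq: "q \<noteq> 0" "\<forall>x. poly q x \<noteq> 0 \<longrightarrow> F x = poly p x / poly q x"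
    using assms(1) unfolding ratD_def by blast
  have op: "open {x. poly q x \<noteq> 0}"
    by (rule open_Collect_neq) (auto intro: continuous_intros)
  show ?thesis
  proof (intro exI conjI allI impI)
    show "q \<noteq> 0" by fact
    fix k assume k: "poly q k \<noteq> 0 \<and> k \<noteq> 0 \<and> 1 - k^2 \<noteq> 0 \<and> 1 + k - k^2 \<noteq> 0 \<and> 1 - 4*k - k^2 \<noteq> 0"
    then have "k \<in> dom0" unfolding dom0_def by auto
    with assms(2) have "(F has_real_derivative integrand a1 a2 a3 k) (at k)" by blast
    then show "((\<lambda>x. poly p x / poly q x) has_real_derivative integrand a1 a2 a3 k) (at k)"
      by (rule has_field_derivative_transform_within_open[OF _ op]) (use k pq in auto)
  qed
qed

theorem theorem5:
  fixes a1 a2 a3 :: int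
  assumes "(a1, a2, a3) \<in> special_triples"
  shows "\<exists>p q :: real poly. q \<noteq> 0 \<and>
           (\<forall>k. poly q k \<noteq> 0 \<and> k \<noteq> 0 \<and> 1 - k^2 \<noteq> 0 \<and> 1 + k - k^2 \<noteq> 0
                 \<and> 1 - 4*k - k^2 \<noteq> 0 \<longrightarrow>
              ((\<lambda>x. poly p x / poly q x) has_real_derivative integrand a1 a2 a3 k) (at k))"
proof -
  let ?P = "\<lambda>a1 a2 a3. \<exists>F. ratD F \<and> (\<forall>k\<in>dom0. (F has_real_derivative integrand a1 a2 a3 k) (at k))"
  have f3: "?P 0 (-2) 1" using fam3[of 0] by simp
  have f1: "?P 1 0 0" using fam1[of 0] by simp
  have f2: "?P (-2) 0 0" using fam2[of 0] by simp
  have f4: "?P 0 1 (-2)" using fam4[of 0] by simp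
  have "?P a1 a2 a3"
    using assms unfolding special_triples_def
    apply (elim UnE insertE CollectE exE emptyE)
    using f1 f2 f3 f4 sp0 sp1 sp2 sp3 sp4 sp5 sp6 sp7 fam1 fam2 fam3 fam4 by auto
  then obtain F where "ratD F" "\<forall>k\<in>dom0. (F has_real_derivative integrand a1 a2 a3 k) (at k)" by blast
  then show ?thesis by (rule finish)
qed

end
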